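(* Let $T_1=(Q_1,\Sigma,\Delta,R_1,q_1^0)$ and $T_2=(Q_2,\Delta,\Omega,R_2,q_2^0)$ be top-down tree transducers, let $\hat{T}_1$ be the product construction of $T_1$ and the domain automaton of $T_2$, and let $M$ be the look-ahead transducer constructed from $T_1$ and $T_2$ as described in the context. Then $\mathcal{R}(\hat{T}_1)\circ\mathcal{R}(T_2)\subseteq\mathcal{R}(M)$.
   Context: A top-down tree transducer $T=(Q,\Sigma,\Delta,R,q_0)$ has finite state set $Q$, ranked input/output alphabets $\Sigma,\Delta$, initial state $q_0$, and finite rule set $R$ of rules $q(a(x_1,\dots,x_k))\to t$ with $a\in\Sigma_k$ ($\Sigma_k$ = symbols of rank $k$) and $t$ a tree over $\Delta$ whose leaves may additionally be of the form $q'(x_i)$, $q'\in Q$, $i\in[k]$; rules are used as rewrite rules in the usual way. $\mathcal{R}(T)$ is the set of pairs $(s,t)$ with $t$ a tree over $\Delta$ derivable from $q_0(s)$; $\mathcal{R}_1\circ\mathcal{R}_2=\{(s,u)\mid\exists t:(s,t)\in\mathcal{R}_1,(t,u)\in\mathcal{R}_2\}$. For $q\in Q$, $a\in\Sigma_k$, $\text{rhs}_T(q,a)$ is the set of right-hand sides of rules with left-hand side $q(a(x_1,\dots,x_k))$; for a right-hand side $\xi$ (resp. a set $\Gamma$ of right-hand sides), $\xi[x_i]$ (resp. $\Gamma[x_i]$) is the set of states $q'$ such that $q'(x_i)$ occurs in $\xi$ (resp. in some tree of $\Gamma$). Domain automaton of $T$: the top-down tree automaton (transducer over $\Sigma$ with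 rules of the form $p(a(x_1,\dots,x_k))\to a(p_1(x_1),\dots,p_k(x_k))$) with states all subsets of $Q$, initial state $\{q_0\}$, rules $S(a(x_1,\dots,x_k))\to a(S_1(x_1),\dots,S_k(x_k))$ for every $a\in\Sigma_k$, nonempty $S=\{q_1,\dots,q_n\}\subseteq Q$ and nonempty $\Gamma_j\subseteq\text{rhs}_T(q_j,a)$ ($j\in[n]$), where $S_i=\bigcup_j\Gamma_j[x_i]$, and rules $\emptyset(a(x_1,\dots,x_k))\to a(\emptyset(x_1),\dots,\emptyset(x_k))$ for all $a$; for an automaton state $l$, $\text{dom}(l)$ is the set of trees accepted from $l$. Product construction of transducers $T=(Q,\Sigma,\Delta,R,q_0)$ and $T'=(Q',\Delta,\Omega,R',q'_0)$: the transducer with states $Q\times Q'$, initial state $(q_0,q'_0)$, and, for every rule $q(a(x_1,\dots,x_k))\to\xi$ of $T$, every $p\in Q'$ and every tree $\zeta$ derivable from $p(\xi)$ using rules of $T'$ in which the leaves of $\xi$ of the form $q''(x_i)$ are treated as unrewritable symbols and a state $p'$ applied to such a leaf stays as $p'(q''(x_i))$, the rule $(q,p)(a(x_1,\dots,x_k))\to\zeta'$ (said to be obtained from the rule $q(a(x_1,\dots,x_k))\to\xi$ by translating $\xi$ with $p$), where $\zeta'$ replaces each $p'(q''(x_i))$ by $(q'',p')(x_i)$. A top-down tree transducer with look-ahead is a tuple $(Q,\Sigma,\Delta,R,q_0,B)$ where $B$ is a top-down tree automaton over $\Sigma$ with state set $L$ and rules have the form $q(a(x_1\!:\!l_1,\dots,x_k\!:\!l_k))\to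 t$ with $l_i\in L$; on input $s$, each node $v$ with label $a\in\Sigma_k$ is first relabeled by $\langle a,l_1,\dots,l_k\rangle$ where $l_i\in L$ are such that the $i$-th subtree of $v$ is in $\text{dom}(l_i)$, and the relabeled tree is then processed reading each rule as $q(\langle a,l_1,\dots,l_k\rangle(x_1,\dots,x_k))\to t$; the relation consists of all pairs $(s,r)$ with $r$ obtainable this way. Construction of $M$: let $\hat{T}_1$ be the product construction of $T_1$ and the domain automaton of $T_2$ (states written $(q,S)$ with $q\in Q_1$, $S\subseteq Q_2$), and $N$ the product construction of $\hat{T}_1$ and $T_2$ (states written $(q,S,q')$). The states of $M$ are the $(q,S,q')$ with $q'\in S$; its initial state is $(q_1^0,\{q_2^0\},q_2^0)$; its look-ahead automaton is the domain automaton $\hat{A}$ of $\hat{T}_1$. For every rule $(q,S,q')(a(x_1,\dots,x_k))\to\gamma$ of $N$ involving only such states, obtained from the rule $(q,S)(a(x_1,\dots,x_k))\to\xi$ of $\hat{T}_1$ by translating $\xi$ with $q'$, and for all states $l_1,\dots,l_k$ of $\hat{A}$ with $\xi[x_i]\subseteq l_i$ ($i\in[k]$), $M$ has the rule $(q,S,q')(a(x_1\!:\!l_1,\dots,x_k\!:\!l_k))\to\gamma$. *)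

theory Defs
  imports Main
begin

datatype 'f tree = Node 'f "'f tree list"

inductive_set trees :: "('f \<times> nat) set \<Rightarrow> 'f tree set" for \<Sigma> where
  "(f, length ts) \<in> \<Sigma> \<Longrightarrow> \<forall>t\<in>set ts. t \<in> trees \<Sigma> \<Longrightarrow> Node f ts \<in> trees \<Sigma>"

text \<open>Right-hand sides: trees over the output alphabet whose leaves may be
 q'(x_i); RState q i stands for q(x_i) (variables are 1-based).\<close>

datatype ('q, 'g) rhs = RNode 'g "('q, 'g) rhs list" | RState 'q nat

fun xstates :: "('q, 'g) rhs \<Rightarrow> nat \<Rightarrow> 'q set" where
  "xstates (RState q j) i = (if j = i then {q} else {})"
| "xstates (RNode g xs) i = (\<Union>x\<in>set xs. xstates x i)"

fun rstates :: "('q, 'g) rhs \<Rightarrow> 'q set" where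
  "rstates (RState q j) = {q}"
| "rstates (RNode g xs) = (\<Union>x\<in>set xs. rstates x)"

fun wf_rhs :: "'q set \<Rightarrow> ('g \<times> nat) set \<Rightarrow> nat \<Rightarrow> ('q, 'g) rhs \<Rightarrow> bool" where
  "wf_rhs Q \<Delta> k (RState q i) = (q \<in> Q \<and> 1 \<le> i \<and> i \<le> k)"
| "wf_rhs Q \<Delta> k (RNode g xs) = ((g, length xs) \<in> \<Delta> \<and> (\<forall>x\<in>set xs. wf_rhs Q \<Delta> k x))"

text \<open>A rule (q, (a,k), t) stands for q(a(x_1,...,x_k)) -> t.\<close>
record ('q, 'f, 'g) td =
  td_states :: "'q set"
  td_inp :: "('f \<times> nat) set"
  td_outp :: "('g \<times> nat) set"
  td_rules :: "('q \<times> ('f \<times> nat) \<times> ('q, 'g) rhs) set"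
  td_init :: 'q

definition wf_td :: "('q, 'f, 'g) td \<Rightarrow> bool" where
  "wf_td T \<longleftrightarrow> finite (td_states T) \<and> finite (td_inp T) \<and> finite (td_outp T)
     \<and> finite (td_rules T) \<and> td_init T \<in> td_states T
     \<and> (\<forall>(q, (a, k), \<xi>) \<in> td_rules T. q \<in> td_states T \<and> (a, k) \<in> td_inp T
            \<and> wf_rhs (td_states T) (td_outp T) k \<xi>)"

definition rhs_of :: "('q, 'f, 'g) td \<Rightarrow> 'q \<Rightarrow> ('f \<times> nat) \<Rightarrow> ('q, 'g) rhs set" where
  "rhs_of T q a = {\<xi>. (q, a, \<xi>) \<in> td_rules T}"

text \<open>Rewriting semantics: td_run T q s t means the ground tree t is derivable
 from q(s); every occurrence of q'(x_i) is rewritten independently.\<close>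
inductive td_run :: "('q, 'f, 'g) td \<Rightarrow> 'q \<Rightarrow> 'f tree \<Rightarrow> 'g tree \<Rightarrow> bool"
  and td_inst :: "('q, 'f, 'g) td \<Rightarrow> 'f tree list \<Rightarrow> ('q, 'g) rhs \<Rightarrow> 'g tree \<Rightarrow> bool"
  for T where
  "(q, (a, length ss), \<xi>) \<in> td_rules T \<Longrightarrow> td_inst T ss \<xi> t \<Longrightarrow> td_run T q (Node a ss) t"
| "1 \<le> i \<Longrightarrow> i \<le> length ss \<Longrightarrow> td_run T q (ss ! (i - 1)) t \<Longrightarrow> td_inst T ss (RState q i) t"
| "list_all2 (td_inst T ss) xs ts \<Longrightarrow> td_inst T ss (RNode g xs) (Node g ts)"

definition Rel :: "('q, 'f, 'g) td \<Rightarrow> ('f tree \<times> 'g tree) set" where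
  "Rel T = {(s, t). s \<in> trees (td_inp T) \<and> t \<in> trees (td_outp T) \<and> td_run T (td_init T) s t}"

definition tdom :: "('l, 'f, 'f) td \<Rightarrow> 'l \<Rightarrow> 'f tree set" where
  "tdom B l = {s. \<exists>t. td_run B l s t}"

definition domA :: "('q, 'f, 'g) td \<Rightarrow> ('q set, 'f, 'f) td" where
  "domA T = \<lparr> td_states = Pow (td_states T), td_inp = td_inp T, td_outp = td_inp T,
     td_rules =
       {(S, (a, k), RNode a (map (\<lambda>i. RState (Ss i) i) [1..<Suc k])) | S a k Ss.
          (a, k) \<in> td_inp T \<and> S \<noteq> {} \<and> S \<subseteq> td_states T \<and>
          (\<exists>\<Gamma>. (\<forall>q\<in>S. \<Gamma> q \<noteq> {} \<and> \<Gamma> q \<subseteq> rhs_of T q (a, k)) \<and>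
               (\<forall>i. Ss i = (\<Union>q\<in>S. \<Union>\<xi>\<in>\<Gamma> q. xstates \<xi> i)))}
       \<union> {({}, (a, k), RNode a (map (\<lambda>i. RState {} i) [1..<Suc k])) | a k. (a, k) \<in> td_inp T},
     td_init = {td_init T} \<rparr>"

text \<open>transl T' p xi zeta: zeta (with leaves (q'',p')(x_i)) is obtained by translating
 the right-hand side xi with state p of T', treating the leaves q''(x_i) of xi as
 unrewritable symbols (a state p' reaching such a leaf stays as p'(q''(x_i))).\<close>
inductive transl :: "('q', 'g, 'h) td \<Rightarrow> 'q' \<Rightarrow> ('q, 'g) rhs \<Rightarrow> ('q \<times> 'q', 'h) rhs \<Rightarrow> bool"
  and transl_inst :: "('q', 'g, 'h) td \<Rightarrow> ('q, 'g) rhs list \<Rightarrow> ('q', 'h) rhs \<Rightarrow> ('q \<times> 'q', 'h) rhs \<Rightarrow> bool"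
  for T' where
  "transl T' p (RState q i) (RState (q, p) i)"
| "(p, (g, length xs), \<eta>) \<in> td_rules T' \<Longrightarrow> transl_inst T' xs \<eta> \<zeta> \<Longrightarrow> transl T' p (RNode g xs) \<zeta>"
| "1 \<le> j \<Longrightarrow> j \<le> length xs \<Longrightarrow> transl T' p' (xs ! (j - 1)) \<zeta> \<Longrightarrow> transl_inst T' xs (RState p' j) \<zeta>"
| "list_all2 (transl_inst T' xs) \<eta>s \<zeta>s \<Longrightarrow> transl_inst T' xs (RNode h \<eta>s) (RNode h \<zeta>s)"

definition prod_td :: "('q, 'f, 'g) td \<Rightarrow> ('q', 'g, 'h) td \<Rightarrow> ('q \<times> 'q', 'f, 'h) td" where
  "prod_td T T' = \<lparr> td_states = td_states T \<times> td_states T', td_inp = td_inp T,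
     td_outp = td_outp T',
     td_rules = {((q, p), a, \<zeta>) | q p a \<xi> \<zeta>.
                   (q, a, \<xi>) \<in> td_rules T \<and> p \<in> td_states T' \<and> transl T' p \<xi> \<zeta>},
     td_init = (td_init T, td_init T') \<rparr>"

text \<open>A rule (q, ((a, [l_1,...,l_k]), k), t) stands for
 q(a(x_1:l_1,...,x_k:l_k)) -> t; la_aut is the look-ahead automaton B.\<close>
record ('q, 'f, 'g, 'l) latd =
  la_states :: "'q set"
  la_inp :: "('f \<times> nat) set"
  la_outp :: "('g \<times> nat) set"
  la_rules :: "('q \<times> (('f \<times> 'l list) \<times> nat) \<times> ('q, 'g) rhs) set"
  la_init :: 'q
  la_aut :: "('l, 'f, 'f) td"

definition la_base :: "('q, 'f, 'g, 'l) latd \<Rightarrow> ('q, 'f \<times> 'l list, 'g) td" where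
  "la_base M = \<lparr> td_states = la_states M,
     td_inp = {((a, ls), k) | a ls k. (a, k) \<in> la_inp M \<and> length ls = k
                                   \<and> set ls \<subseteq> td_states (la_aut M)},
     td_outp = la_outp M, td_rules = la_rules M, td_init = la_init M \<rparr>"

inductive relabel :: "('l, 'f, 'f) td \<Rightarrow> 'f tree \<Rightarrow> ('f \<times> 'l list) tree \<Rightarrow> bool" for B where
  "length ls = length ss \<Longrightarrow>
   (\<forall>i<length ss. ls ! i \<in> td_states B \<and> ss ! i \<in> tdom B (ls ! i)) \<Longrightarrow>
   list_all2 (relabel B) ss ss' \<Longrightarrow> relabel B (Node a ss) (Node (a, ls) ss')"

definition Rel_la :: "('q, 'f, 'g, 'l) latd \<Rightarrow> ('f tree \<times> 'g tree) set" where
  "Rel_la M = {(s, r). s \<in> trees (la_inp M) \<and> r \<in> trees (la_outp M) \<and>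
      (\<exists>s'. relabel (la_aut M) s s' \<and> td_run (la_base M) (la_init M) s' r)}"

definition T1hat :: "('q1, 'f, 'g) td \<Rightarrow> ('q2, 'g, 'h) td \<Rightarrow> ('q1 \<times> 'q2 set, 'f, 'g) td" where
  "T1hat T1 T2 = prod_td T1 (domA T2)"

definition Mcon :: "('q1, 'f, 'g) td \<Rightarrow> ('q2, 'g, 'h) td
     \<Rightarrow> (('q1 \<times> 'q2 set) \<times> 'q2, 'f, 'h, ('q1 \<times> 'q2 set) set) latd" where
  "Mcon T1 T2 =
    (let Th = T1hat T1 T2; N = prod_td Th T2; A = domA Th;
         QM = {((q, S), q'). ((q, S), q') \<in> td_states N \<and> q' \<in> S} in
     \<lparr> la_states = QM, la_inp = td_inp T1, la_outp = td_outp T2,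
       la_rules = {(((q, S), q'), ((a, ls), k), \<gamma>) | q S q' a ls k \<gamma>.
          (((q, S), q'), (a, k), \<gamma>) \<in> td_rules N \<and> ((q, S), q') \<in> QM \<and> rstates \<gamma> \<subseteq> QM \<and>
          (\<exists>\<xi>. ((q, S), (a, k), \<xi>) \<in> td_rules Th \<and> transl T2 q' \<xi> \<gamma> \<and>
               length ls = k \<and> (\<forall>i<k. ls ! i \<in> td_states A \<and> xstates \<xi> (Suc i) \<subseteq> ls ! i))},
       la_init = ((td_init T1, {td_init T2}), td_init T2),
       la_aut = A \<rparr>)"

end

theory Submission
  imports Defs
begin



inductive_cases run_NodeE: "td_run T q (Node a ss) t"
inductive_cases inst_StateE: "td_inst T ss (RState q i) t"
inductive_cases inst_NodeE: "td_inst T ss (RNode g xs) t"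
inductive_cases transl_StateE: "transl T p (RState q i) z"
inductive_cases transl_NodeE: "transl T p (RNode g xs) z"

lemma wf_rhs_rstates: "wf_rhs Q D k \<xi> \<Longrightarrow> rstates \<xi> \<subseteq> Q"
  by (induction \<xi>) auto

lemma xstates_rstates: "xstates \<xi> i \<subseteq> rstates \<xi>"
  by (induction \<xi>) auto

lemma choice_list: "(\<forall>j<n. \<exists>x. P j x) \<Longrightarrow> \<exists>xs. length xs = n \<and> (\<forall>j<n. P j (xs!j))"
  by (rule exI[of _ "map (\<lambda>j. SOME x. P j x) [0..<n]"]) (auto intro: someI_ex)

lemma inst_xstates: "td_inst T ss \<xi> t \<Longrightarrow> q \<in> xstates \<xi> i \<Longrightarrow> \<exists>t'. td_run T q (ss!(i-1)) t'"
proof (induction \<xi> arbitrary: t)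
  case (RNode g xs)
  from RNode.prems(1) obtain ts where "list_all2 (td_inst T ss) xs ts"
    by (auto elim: inst_NodeE)
  moreover from RNode.prems(2) obtain x where "x \<in> set xs" "q \<in> xstates x i" by auto
  ultimately show ?case using RNode.IH
    by (metis in_set_conv_nth list_all2_conv_all_nth)
qed (auto elim: inst_StateE split: if_splits)

lemma transl_rstates:
  "transl T' p \<xi> \<zeta> \<Longrightarrow> (\<forall>(p,a,\<eta>)\<in>td_rules T'. rstates \<eta> \<subseteq> td_states T') \<Longrightarrow> p \<in> td_states T'
     \<Longrightarrow> rstates \<zeta> \<subseteq> rstates \<xi> \<times> td_states T'"
  "transl_inst T' xs \<eta> \<zeta> \<Longrightarrow> (\<forall>(p,a,\<eta>)\<in>td_rules T'. rstates \<eta> \<subseteq> td_states T') \<Longrightarrow> rstates \<eta> \<subseteq> td_states T'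
     \<Longrightarrow> rstates \<zeta> \<subseteq> (\<Union>x\<in>set xs. rstates x) \<times> td_states T'"
proof (induction rule: transl_transl_inst.inducts)
  case (1 p q i)
  then show ?case by auto
next
  case (2 p g xs \<eta> \<zeta>)
  then have "rstates \<eta> \<subseteq> td_states T'" by blast
  with 2 have "rstates \<zeta> \<subseteq> (\<Union>x\<in>set xs. rstates x) \<times> td_states T'" by blast
  then show ?case by simp
next
  case (3 j xs p' \<zeta>)
  then have m: "xs ! (j-1) \<in> set xs" by simp
  have "rstates \<zeta> \<subseteq> rstates (xs!(j-1)) \<times> td_states T'" using 3 by simp
  with m show ?case by auto
next
  case (4 xs \<eta>s \<zeta>s h)
  show ?case
  proof
    fix z assume "z \<in> rstates (RNode h \<zeta>s)"
    then obtain k where k: "k < length \<zeta>s" "z \<in> rstates (\<zeta>s!k)" by (auto simp: in_set_conv_nth)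
    have l: "length \<eta>s = length \<zeta>s" using 4(1) by (simp add: list_all2_conv_all_nth)
    with k have "\<eta>s!k \<in> set \<eta>s" by simp
    with 4(3) have "rstates (\<eta>s!k) \<subseteq> td_states T'" by auto
    with 4(1,2) k have "rstates (\<zeta>s!k) \<subseteq> (\<Union>x\<in>set xs. rstates x) \<times> td_states T'"
      by (auto simp: list_all2_conv_all_nth)
    with k show "z \<in> (\<Union>x\<in>set xs. rstates x) \<times> td_states T'" by blast
  qed
qed

fun er :: "('q \<times> 'x, 'g) rhs \<Rightarrow> ('q, 'g) rhs" where
  "er (RState q i) = RState (fst q) i"
| "er (RNode g xs) = RNode g (map er xs)"

fun sub :: "('p, 'g) rhs \<Rightarrow> ('q, 'g) rhs list \<Rightarrow> ('q, 'g) rhs" where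
  "sub (RState p j) xs = xs!(j-1)"
| "sub (RNode h \<eta>s) xs = RNode h (map (\<lambda>\<eta>. sub \<eta> xs) \<eta>s)"

lemma transl_er:
  "transl T' p \<xi> \<zeta> \<Longrightarrow> (\<forall>p g n \<eta> xs. (p,(g,n),\<eta>)\<in>td_rules T' \<longrightarrow> length xs = n \<longrightarrow> sub \<eta> xs = RNode g (xs::('q,'g) rhs list))
     \<Longrightarrow> er \<zeta> = (\<xi>::('q,'g) rhs)"
  "transl_inst T' xs \<eta> \<zeta> \<Longrightarrow> (\<forall>p g n \<eta> xs. (p,(g,n),\<eta>)\<in>td_rules T' \<longrightarrow> length xs = n \<longrightarrow> sub \<eta> xs = RNode g (xs::('q,'g) rhs list))
     \<Longrightarrow> er \<zeta> = sub \<eta> (xs::('q,'g) rhs list)"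
proof (induction rule: transl_transl_inst.inducts)
  case (4 xs \<eta>s \<zeta>s h)
  then show ?case by (auto simp: list_all2_conv_all_nth intro: nth_equalityI)
next
  case (2 p g xs \<eta> \<zeta>)
  have "er \<zeta> = sub \<eta> xs" using 2(3)[OF 2(4)] .
  moreover have "sub \<eta> xs = RNode g xs" using 2(1,4) by blast
  ultimately show ?case by simp
next
  case (3 j xs p' \<zeta>)
  then show ?case by simp
qed simp

lemma domA_ruleI:
  assumes "(a,k) \<in> td_inp T" "S \<subseteq> td_states T" "\<forall>q\<in>S. \<Gamma> q \<noteq> {} \<and> \<Gamma> q \<subseteq> rhs_of T q (a,k)"
  shows "(S,(a,k),RNode a (map (\<lambda>i. RState (\<Union>q\<in>S. \<Union>\<xi>\<in>\<Gamma> q. xstates \<xi> i) i) [1..<Suc k])) \<in> td_rules (domA T)"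
proof (cases "S = {}")
  case True
  then show ?thesis using assms(1) by (simp add: domA_def)
next
  case False
  show ?thesis
    unfolding domA_def td.simps
    apply (rule UnI1)
    apply (rule CollectI)
    apply (rule exI[of _ S], rule exI[of _ a], rule exI[of _ k], rule exI[of _ "\<lambda>i. \<Union>q\<in>S. \<Union>\<xi>\<in>\<Gamma> q. xstates \<xi> i"])
    using assms False by blast
qed



fun rl :: "('x,'f,'g) td \<Rightarrow> 'f tree \<Rightarrow> ('f \<times> 'x set list) tree" where
  "rl T (Node a ss) = Node (a, map (\<lambda>s. {x \<in> td_states T. \<exists>t. td_run T x s t}) ss) (map (rl T) ss)"

lemma map_nth_upt: "map (\<lambda>i. xs ! (i - 1)) [1..<Suc (length xs)] = xs"
proof -
  have "[1..<Suc (length xs)] = map Suc [0..<length xs]" by (simp add: map_Suc_upt)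
  then show ?thesis by (simp add: comp_def map_nth)
qed

lemma map_nth_upt': "map (\<lambda>i. xs ! (i - Suc 0)) [Suc 0..<Suc (length xs)] = xs"
  using map_nth_upt by (simp del: upt_Suc)

lemma domA_sub: "\<forall>p g n \<eta> xs. (p,(g,n),\<eta>)\<in>td_rules (domA T) \<longrightarrow> length xs = n \<longrightarrow> sub \<eta> xs = RNode g xs"
  unfolding domA_def by (auto simp del: upt_Suc simp: comp_def map_nth_upt')

locale comp =
  fixes T1 :: "('q1,'f,'g) td" and T2 :: "('q2,'g,'h) td"
  assumes wf1: "wf_td T1" and wf2: "wf_td T2" and io: "td_inp T2 = td_outp T1"
begin

abbreviation "Th \<equiv> T1hat T1 T2"
abbreviation "N \<equiv> prod_td Th T2"
abbreviation "QM \<equiv> {((q, S), q'). ((q, S), q') \<in> td_states N \<and> q' \<in> S}"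
abbreviation "Mb \<equiv> la_base (Mcon T1 T2)"

lemma domA_simps: "td_states (domA T) = Pow (td_states T)" "td_inp (domA T) = td_inp T"
  "td_outp (domA T) = td_inp T" "td_init (domA T) = {td_init T}"
  by (simp_all add: domA_def)

lemma Th_simps: "td_states Th = td_states T1 \<times> Pow (td_states T2)" "td_inp Th = td_inp T1"
  "td_outp Th = td_inp T2" "td_init Th = (td_init T1, {td_init T2})"
  by (simp_all add: T1hat_def prod_td_def domA_simps)

lemma Th_rules: "(x, a, \<zeta>) \<in> td_rules Th \<longleftrightarrow>
   (\<exists>q S \<xi>. x = (q,S) \<and> (q,a,\<xi>) \<in> td_rules T1 \<and> S \<subseteq> td_states T2 \<and> transl (domA T2) S \<xi> \<zeta>)"
  by (cases a) (auto simp: T1hat_def prod_td_def domA_simps)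

lemma N_simps: "td_states N = td_states Th \<times> td_states T2"
  by (simp add: prod_td_def)

lemma M_simps: "la_init (Mcon T1 T2) = ((td_init T1, {td_init T2}), td_init T2)"
  "la_aut (Mcon T1 T2) = domA Th" "la_inp (Mcon T1 T2) = td_inp T1"
  "la_outp (Mcon T1 T2) = td_outp T2" "td_rules Mb = la_rules (Mcon T1 T2)"
  "td_init Mb = la_init (Mcon T1 T2)"
  by (simp_all add: Mcon_def Let_def la_base_def)

lemma wf1_rule: "(q,(a,k),\<xi>) \<in> td_rules T1 \<Longrightarrow> q \<in> td_states T1 \<and> wf_rhs (td_states T1) (td_outp T1) k \<xi>"
  using wf1 by (auto simp: wf_td_def)

lemma wf2_rule: "(q,(a,k),\<xi>) \<in> td_rules T2 \<Longrightarrow> q \<in> td_states T2 \<and> (a,k) \<in> td_inp T2 \<and> rstates \<xi> \<subseteq> td_states T2"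
proof -
  assume a: "(q,(a,k),\<xi>) \<in> td_rules T2"
  have "q \<in> td_states T2 \<and> (a,k) \<in> td_inp T2 \<and> wf_rhs (td_states T2) (td_outp T2) k \<xi>"
    using wf2 a unfolding wf_td_def by fastforce
  then show ?thesis using wf_rhs_rstates by blast
qed

lemma T2_rstates: "\<forall>(p,a,\<eta>)\<in>td_rules T2. rstates \<eta> \<subseteq> td_states T2"
proof (clarify)
  fix p a k \<eta> x assume "(p, (a,k), \<eta>) \<in> td_rules T2" "x \<in> rstates \<eta>"
  then show "x \<in> td_states T2" by (blast dest: wf2_rule)
qed

lemma domA2_rstates: "\<forall>(p,a,\<eta>)\<in>td_rules (domA T2). rstates \<eta> \<subseteq> td_states (domA T2)"
proof -
  have aux: "x \<in> td_states T2"
    if "\<forall>q\<in>S. \<Gamma> q \<noteq> {} \<and> \<Gamma> q \<subseteq> rhs_of T2 q (a, k)" "q \<in> S" "\<xi> \<in> \<Gamma> q" "x \<in> xstates \<xi> i"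
    for S \<Gamma> a k i q \<xi> x
    using that wf2_rule xstates_rstates unfolding rhs_of_def by fast
  show ?thesis
    unfolding domA_def by (auto split: if_splits dest: aux)
qed

lemma Th_rule_rstates: "(x,a,\<zeta>) \<in> td_rules Th \<Longrightarrow> rstates \<zeta> \<subseteq> td_states Th"
proof -
  assume "(x,a,\<zeta>) \<in> td_rules Th"
  then obtain q S \<xi> where r: "(q,a,\<xi>) \<in> td_rules T1" "S \<subseteq> td_states T2" "transl (domA T2) S \<xi> \<zeta>"
    unfolding Th_rules by blast
  have "rstates \<zeta> \<subseteq> rstates \<xi> \<times> td_states (domA T2)"
    using transl_rstates(1)[OF r(3) domA2_rstates] r(2) by (simp add: domA_def)
  moreover have "rstates \<xi> \<subseteq> td_states T1" using r(1) wf1_rule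
    by (metis prod.exhaust wf_rhs_rstates)
  ultimately show ?thesis by (auto simp: Th_simps domA_def)
qed


lemma Th_xstates: "(x,a,\<zeta>) \<in> td_rules Th \<Longrightarrow> y \<in> xstates \<zeta> i \<Longrightarrow> y \<in> td_states Th"
proof -
  assume "(x,a,\<zeta>) \<in> td_rules Th" "y \<in> xstates \<zeta> i"
  then show ?thesis using Th_rule_rstates[of x a \<zeta>] xstates_rstates[of \<zeta> i] by (meson subsetD)
qed

lemma proj: "td_run Th x s t \<Longrightarrow> td_run T1 (fst x) s t" "td_inst Th ss \<zeta> t \<Longrightarrow> td_inst T1 ss (er \<zeta>) t"
proof (induction rule: td_run_td_inst.inducts)
  case (1 q a ss \<zeta> t)
  then obtain q' S \<xi> where r: "q = (q',S)" "(q',(a, length ss),\<xi>) \<in> td_rules T1" "transl (domA T2) S \<xi> \<zeta>"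
    unfolding Th_rules by blast
  have "er \<zeta> = \<xi>" using transl_er(1)[OF r(3) domA_sub] .
  with 1 r show ?case by (auto intro: td_run_td_inst.intros)
next
  case (2 i ss q t)
  then show ?case by (auto intro: td_run_td_inst.intros)
next
  case (3 ss xs ts g)
  then have "list_all2 (td_inst T1 ss) (map er xs) ts"
    by (auto simp: list_all2_map1 elim: list_all2_mono)
  then show ?case by (auto intro: td_run_td_inst.intros)
qed

lemma dom: "s \<in> trees (td_inp T1) \<Longrightarrow> L \<subseteq> td_states Th \<Longrightarrow> (\<forall>x\<in>L. \<exists>t. td_run Th x s t)
   \<Longrightarrow> \<exists>r. td_run (domA Th) L s r"
proof (induction s arbitrary: L rule: trees.induct)
  case (1 a ss)
  define n where "n = length ss"
  define \<Gamma> where "\<Gamma> x = {\<xi>. (x,(a,n),\<xi>) \<in> td_rules Th \<and> (\<exists>t. td_inst Th ss \<xi> t)}" for x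
  define Ls where "Ls i = (\<Union>x\<in>L. \<Union>\<xi>\<in>\<Gamma> x. xstates \<xi> i)" for i
  have inp: "(a, n) \<in> td_inp Th" using 1(1) by (simp add: Th_simps n_def)
  have rule: "(L,(a,n),RNode a (map (\<lambda>i. RState (Ls i) i) [1..<Suc n])) \<in> td_rules (domA Th)"
    unfolding Ls_def
  proof (rule domA_ruleI[OF inp 1(3)])
    have "\<Gamma> x \<noteq> {}" if xL: "x \<in> L" for x
    proof -
      obtain t where "td_run Th x (Node a ss) t" using 1(4) xL by metis
      then show ?thesis by (cases rule: td_run.cases) (auto simp: \<Gamma>_def n_def)
    qed
    moreover have "\<Gamma> x \<subseteq> rhs_of Th x (a, n)" for x by (auto simp: \<Gamma>_def rhs_of_def)
    ultimately show "\<forall>q\<in>L. \<Gamma> q \<noteq> {} \<and> \<Gamma> q \<subseteq> rhs_of Th q (a, n)" by blast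
  qed
  have "\<forall>j<n. \<exists>r. td_run (domA Th) (Ls (Suc j)) (ss!j) r"
  proof (intro allI impI)
    fix j assume j: "j < n"
    have "Ls (Suc j) \<subseteq> td_states Th"
      unfolding Ls_def \<Gamma>_def by (auto dest: Th_xstates)
    moreover have "\<forall>x\<in>Ls (Suc j). \<exists>t. td_run Th x (ss!j) t"
      unfolding Ls_def \<Gamma>_def using inst_xstates[where i="Suc j"] by fastforce
    moreover have "ss!j \<in> set ss" using j by (simp add: n_def)
    ultimately show "\<exists>r. td_run (domA Th) (Ls (Suc j)) (ss!j) r" using 1(2) by blast
  qed
  then obtain rs where rs: "length rs = n" "\<forall>j<n. td_run (domA Th) (Ls (Suc j)) (ss!j) (rs!j)"
    using choice_list[where P="\<lambda>j r. td_run (domA Th) (Ls (Suc j)) (ss!j) r"] by blast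
  have "list_all2 (td_inst (domA Th) ss) (map (\<lambda>i. RState (Ls i) i) [1..<Suc n]) rs"
  proof (rule list_all2_all_nthI)
    show "length (map (\<lambda>i. RState (Ls i) i) [1..<Suc n]) = length rs" using rs by simp
    fix j assume "j < length (map (\<lambda>i. RState (Ls i) i) [1..<Suc n])"
    then have j: "j < n" by (simp del: upt_Suc)
    then have e: "map (\<lambda>i. RState (Ls i) i) [1..<Suc n] ! j = RState (Ls (Suc j)) (Suc j)"
      by (simp del: upt_Suc)
    show "td_inst (domA Th) ss (map (\<lambda>i. RState (Ls i) i) [1..<Suc n] ! j) (rs ! j)"
      unfolding e by (rule td_run_td_inst.intros) (use j rs in \<open>auto simp: n_def\<close>)
  qed
  then have "td_inst (domA Th) ss (RNode a (map (\<lambda>i. RState (Ls i) i) [1..<Suc n])) (Node a rs)"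
    by (rule td_run_td_inst.intros)
  with rule show ?case unfolding n_def by (blast intro: td_run_td_inst.intros)
qed

lemma relab: "s \<in> trees (td_inp T1) \<Longrightarrow> relabel (domA Th) s (rl Th s)"
proof (induction s rule: trees.induct)
  case (1 a ss)
  show ?case
    unfolding rl.simps
  proof (rule relabel.intros)
    show "\<forall>i<length ss. map (\<lambda>s. {x \<in> td_states Th. \<exists>t. td_run Th x s t}) ss ! i \<in> td_states (domA Th) \<and>
        ss ! i \<in> tdom (domA Th) (map (\<lambda>s. {x \<in> td_states Th. \<exists>t. td_run Th x s t}) ss ! i)"
    proof (intro allI impI conjI)
      fix i assume i: "i < length ss"
      then have "ss!i \<in> trees (td_inp T1)" using 1(2) by auto
      then show "ss ! i \<in> tdom (domA Th) (map (\<lambda>s. {x \<in> td_states Th. \<exists>t. td_run Th x s t}) ss ! i)"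
        using dom i unfolding tdom_def by auto
    qed (auto simp: domA_simps)
    show "list_all2 (relabel (domA Th)) ss (map (rl Th) ss)"
      using 1(2) by (auto simp: list_all2_conv_all_nth)
  qed simp
qed

end



lemma I_lem:
  assumes "td_inst T2 ts \<eta> u" "\<forall>j. xstates \<eta> j \<subseteq> Ss j" "length \<zeta>s = length ts"
   "\<forall>j<length ts. \<forall>p' u'. p' \<in> Ss (Suc j) \<longrightarrow> td_run T2 p' (ts!j) u' \<longrightarrow>
       (\<exists>\<gamma>. transl T2 p' (\<zeta>s!j) \<gamma> \<and> rstates \<gamma> \<subseteq> QM \<and> td_inst Mb rls \<gamma> u')"
  shows "\<exists>\<gamma>. transl_inst T2 \<zeta>s \<eta> \<gamma> \<and> rstates \<gamma> \<subseteq> QM \<and> td_inst Mb rls \<gamma> u"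
  using assms
proof (induction \<eta> arbitrary: u)
  case (RState p' j)
  from RState.prems(1) have j: "1 \<le> j" "j \<le> length ts" "td_run T2 p' (ts!(j-1)) u"
    by (auto elim: inst_StateE)
  have "p' \<in> Ss j" using RState.prems(2) spec[OF RState.prems(2), of j] by simp
  then have p: "p' \<in> Ss (Suc (j-1))" using j by simp
  have jl: "j - 1 < length ts" using j by simp
  obtain \<gamma> where g: "transl T2 p' (\<zeta>s!(j-1)) \<gamma>" "rstates \<gamma> \<subseteq> QM" "td_inst Mb rls \<gamma> u"
    using RState.prems(4) jl p j(3) by blast
  have "transl_inst T2 \<zeta>s (RState p' j) \<gamma>"
    using j RState.prems(3) g(1) by (intro transl_transl_inst.intros) auto
  with g show ?case by blast
next
  case (RNode h \<eta>s)
  from RNode.prems(1) obtain us where u: "u = Node h us" "list_all2 (td_inst T2 ts) \<eta>s us"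
    by (auto elim: inst_NodeE)
  have "\<forall>k<length \<eta>s. \<exists>\<gamma>. transl_inst T2 \<zeta>s (\<eta>s!k) \<gamma> \<and> rstates \<gamma> \<subseteq> QM \<and> td_inst Mb rls \<gamma> (us!k)"
  proof (intro allI impI)
    fix k assume k: "k < length \<eta>s"
    then have m: "\<eta>s!k \<in> set \<eta>s" by simp
    have i: "td_inst T2 ts (\<eta>s!k) (us!k)" using u(2) k by (simp add: list_all2_conv_all_nth)
    have "\<forall>j. xstates (\<eta>s!k) j \<subseteq> Ss j" using RNode.prems(2) m by auto
    then show "\<exists>\<gamma>. transl_inst T2 \<zeta>s (\<eta>s!k) \<gamma> \<and> rstates \<gamma> \<subseteq> QM \<and> td_inst Mb rls \<gamma> (us!k)"
      using RNode.IH[OF m i _ RNode.prems(3,4)] by blast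
  qed
  then obtain \<gamma>s where gs: "length \<gamma>s = length \<eta>s"
    "\<forall>k<length \<eta>s. transl_inst T2 \<zeta>s (\<eta>s!k) (\<gamma>s!k) \<and> rstates (\<gamma>s!k) \<subseteq> QM \<and> td_inst Mb rls (\<gamma>s!k) (us!k)"
    using choice_list[where P="\<lambda>k \<gamma>. transl_inst T2 \<zeta>s (\<eta>s!k) \<gamma> \<and> rstates \<gamma> \<subseteq> QM \<and> td_inst Mb rls \<gamma> (us!k)"]
    by blast
  have lu: "length us = length \<eta>s" using u(2) by (simp add: list_all2_lengthD)
  have "transl_inst T2 \<zeta>s (RNode h \<eta>s) (RNode h \<gamma>s)"
    using gs by (intro transl_transl_inst.intros) (auto simp: list_all2_conv_all_nth)
  moreover have "rstates (RNode h \<gamma>s) \<subseteq> QM"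
  proof -
    have "rstates \<gamma> \<subseteq> QM" if "\<gamma> \<in> set \<gamma>s" for \<gamma>
      using that gs by (metis in_set_conv_nth)
    then show ?thesis unfolding rstates.simps by (rule UN_least)
  qed
  moreover have "td_inst Mb rls (RNode h \<gamma>s) u"
    using gs lu unfolding u(1) by (intro td_run_td_inst.intros) (auto simp: list_all2_conv_all_nth)
  ultimately show ?case by blast
qed

context comp begin

lemma Mrule:
  assumes "((q,S),(a,k),\<zeta>) \<in> td_rules Th" "p \<in> S" "transl T2 p \<zeta> \<gamma>" "rstates \<gamma> \<subseteq> QM"
    "length ls = k" "\<forall>i<k. ls!i \<subseteq> td_states Th \<and> xstates \<zeta> (Suc i) \<subseteq> ls!i"
  shows "(((q,S),p),((a,ls),k),\<gamma>) \<in> la_rules (Mcon T1 T2)"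
proof -
  from assms(1) obtain \<xi> where r: "(q,(a,k),\<xi>) \<in> td_rules T1" "S \<subseteq> td_states T2"
    unfolding Th_rules by blast
  have q: "q \<in> td_states T1" using wf1_rule[OF r(1)] by blast
  have pS: "p \<in> td_states T2" using assms(2) r(2) by blast
  have QM: "((q,S),p) \<in> QM" using q r(2) pS assms(2) by (simp add: N_simps Th_simps)
  have Nr: "(((q,S),p),(a,k),\<gamma>) \<in> td_rules N"
    using assms(1,3) pS unfolding prod_td_def by auto
  show ?thesis
    unfolding Mcon_def Let_def
    using Nr QM assms by (simp add: domA_simps) blast
qed

end



context comp begin

lemma R:
  assumes IH: "\<And>s q t S. s \<in> set ss \<Longrightarrow> td_run T1 q s t \<Longrightarrow> S \<subseteq> td_states T2 \<Longrightarrow>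
      (\<forall>p\<in>S. \<exists>u. td_run T2 p t u) \<Longrightarrow>
      (\<exists>t'. td_run Th (q,S) s t') \<and> (\<forall>p u. p\<in>S \<longrightarrow> td_run T2 p t u \<longrightarrow> td_run Mb ((q,S),p) (rl Th s) u)"
  shows "wf_rhs (td_states T1) (td_outp T1) (length ss) \<xi> \<Longrightarrow> td_inst T1 ss \<xi> t \<Longrightarrow> S \<subseteq> td_states T2 \<Longrightarrow>
     (\<forall>p\<in>S. \<exists>u. td_run T2 p t u) \<Longrightarrow>
     \<exists>\<zeta>. transl (domA T2) S \<xi> \<zeta> \<and> (\<exists>t'. td_inst Th ss \<zeta> t') \<and>
       (\<forall>p u. p\<in>S \<longrightarrow> td_run T2 p t u \<longrightarrow>
          (\<exists>\<gamma>. transl T2 p \<zeta> \<gamma> \<and> rstates \<gamma> \<subseteq> QM \<and> td_inst Mb (map (rl Th) ss) \<gamma> u))"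
proof (induction \<xi> arbitrary: t S)
  case (RState q i)
  from RState.prems(2) have i: "1 \<le> i" "i \<le> length ss" "td_run T1 q (ss!(i-1)) t"
    by (auto elim: inst_StateE)
  have q: "q \<in> td_states T1" using RState.prems(1) by simp
  have mem: "ss!(i-1) \<in> set ss" using i by simp
  from IH[OF mem i(3) RState.prems(3,4)] obtain t' where t': "td_run Th (q,S) (ss!(i-1)) t'"
    and M: "\<forall>p u. p\<in>S \<longrightarrow> td_run T2 p t u \<longrightarrow> td_run Mb ((q,S),p) (rl Th (ss!(i-1))) u" by blast
  show ?case
  proof (intro exI conjI allI impI)
    show "transl (domA T2) S (RState q i) (RState (q,S) i)" by (rule transl_transl_inst.intros)
    show "td_inst Th ss (RState (q,S) i) t'" using i t' by (intro td_run_td_inst.intros)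
    fix p u assume p: "p \<in> S" "td_run T2 p t u"
    show "transl T2 p (RState (q,S) i) (RState ((q,S),p) i)" by (rule transl_transl_inst.intros)
    show "rstates (RState ((q,S),p) i) \<subseteq> QM" using q p RState.prems(3) by (auto simp: N_simps Th_simps)
    show "td_inst Mb (map (rl Th) ss) (RState ((q,S),p) i) u" using i M p by (intro td_run_td_inst.intros) auto
  qed
next
  case (RNode g xs)
  from RNode.prems(2) obtain ts where t: "t = Node g ts" and lts: "list_all2 (td_inst T1 ss) xs ts"
    by (auto elim: inst_NodeE)
  define n where "n = length xs"
  have ln: "length ts = n" using lts by (simp add: n_def list_all2_lengthD)
  define \<Gamma> where "\<Gamma> p = {\<eta>. (p,(g,n),\<eta>) \<in> td_rules T2 \<and> (\<exists>u. td_inst T2 ts \<eta> u)}" for p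
  define Ss where "Ss i = (\<Union>p\<in>S. \<Union>\<eta>\<in>\<Gamma> p. xstates \<eta> i)" for i
  have gin: "(g,n) \<in> td_inp T2" using RNode.prems(1) io by (simp add: n_def)
  have \<Gamma>ne: "\<forall>p\<in>S. \<Gamma> p \<noteq> {} \<and> \<Gamma> p \<subseteq> rhs_of T2 p (g,n)"
  proof (intro ballI conjI)
    fix p assume pS: "p \<in> S"
    obtain u where "td_run T2 p (Node g ts) u" using RNode.prems(4) pS t by metis
    then show "\<Gamma> p \<noteq> {}" by (cases rule: td_run.cases) (auto simp: \<Gamma>_def ln)
    show "\<Gamma> p \<subseteq> rhs_of T2 p (g,n)" by (auto simp: \<Gamma>_def rhs_of_def)
  qed
  have rule: "(S,(g,n),RNode g (map (\<lambda>i. RState (Ss i) i) [1..<Suc n])) \<in> td_rules (domA T2)"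
    unfolding Ss_def by (rule domA_ruleI[OF gin RNode.prems(3) \<Gamma>ne])
  have allz: "\<forall>j<n. \<exists>\<zeta>. transl (domA T2) (Ss (Suc j)) (xs!j) \<zeta> \<and> (\<exists>t'. td_inst Th ss \<zeta> t') \<and>
      (\<forall>p u. p \<in> Ss (Suc j) \<longrightarrow> td_run T2 p (ts!j) u \<longrightarrow>
         (\<exists>\<gamma>. transl T2 p \<zeta> \<gamma> \<and> rstates \<gamma> \<subseteq> QM \<and> td_inst Mb (map (rl Th) ss) \<gamma> u))"
  proof (intro allI impI)
    fix j assume j: "j < n"
    have xj: "xs!j \<in> set xs" using j n_def by simp
    have wfj: "wf_rhs (td_states T1) (td_outp T1) (length ss) (xs!j)" using RNode.prems(1) xj by simp
    have instj: "td_inst T1 ss (xs!j) (ts!j)" using lts j by (simp add: list_all2_conv_all_nth n_def)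
    have Ssub: "Ss (Suc j) \<subseteq> td_states T2"
    proof
      fix x assume "x \<in> Ss (Suc j)"
      then obtain p \<eta> where pe: "(p,(g,n),\<eta>) \<in> td_rules T2" "x \<in> xstates \<eta> (Suc j)"
        unfolding Ss_def \<Gamma>_def by blast
      have "rstates \<eta> \<subseteq> td_states T2" using wf2_rule[OF pe(1)] by blast
      then show "x \<in> td_states T2" using pe(2) xstates_rstates[of \<eta> "Suc j"] by blast
    qed
    have runs: "\<forall>p\<in>Ss (Suc j). \<exists>u. td_run T2 p (ts!j) u"
    proof
      fix x assume "x \<in> Ss (Suc j)"
      then obtain \<eta> u where "td_inst T2 ts \<eta> u" "x \<in> xstates \<eta> (Suc j)"
        unfolding Ss_def \<Gamma>_def by blast
      then show "\<exists>u. td_run T2 x (ts!j) u" using inst_xstates by fastforce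
    qed
    show "\<exists>\<zeta>. transl (domA T2) (Ss (Suc j)) (xs!j) \<zeta> \<and> (\<exists>t'. td_inst Th ss \<zeta> t') \<and>
      (\<forall>p u. p \<in> Ss (Suc j) \<longrightarrow> td_run T2 p (ts!j) u \<longrightarrow>
         (\<exists>\<gamma>. transl T2 p \<zeta> \<gamma> \<and> rstates \<gamma> \<subseteq> QM \<and> td_inst Mb (map (rl Th) ss) \<gamma> u))"
      using RNode.IH[OF xj wfj instj Ssub runs] .
  qed
  then obtain \<zeta>s where zs: "length \<zeta>s = n" "\<forall>j<n. transl (domA T2) (Ss (Suc j)) (xs!j) (\<zeta>s!j) \<and> (\<exists>t'. td_inst Th ss (\<zeta>s!j) t') \<and>
      (\<forall>p u. p \<in> Ss (Suc j) \<longrightarrow> td_run T2 p (ts!j) u \<longrightarrow>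
         (\<exists>\<gamma>. transl T2 p (\<zeta>s!j) \<gamma> \<and> rstates \<gamma> \<subseteq> QM \<and> td_inst Mb (map (rl Th) ss) \<gamma> u))"
    using choice_list[OF allz] by (elim exE conjE) (rule that, assumption+)
  have li: "list_all2 (transl_inst (domA T2) xs) (map (\<lambda>i. RState (Ss i) i) [1..<Suc n]) \<zeta>s"
  proof (rule list_all2_all_nthI)
    show "length (map (\<lambda>i. RState (Ss i) i) [1..<Suc n]) = length \<zeta>s" using zs by simp
    fix j assume "j < length (map (\<lambda>i. RState (Ss i) i) [1..<Suc n])"
    then have j: "j < n" by (simp del: upt_Suc)
    then have e: "map (\<lambda>i. RState (Ss i) i) [1..<Suc n] ! j = RState (Ss (Suc j)) (Suc j)"
      by (simp del: upt_Suc)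
    show "transl_inst (domA T2) xs (map (\<lambda>i. RState (Ss i) i) [1..<Suc n] ! j) (\<zeta>s ! j)"
      unfolding e by (rule transl_transl_inst.intros) (use j zs in \<open>auto simp: n_def\<close>)
  qed
  have tr: "transl (domA T2) S (RNode g xs) (RNode g \<zeta>s)"
    using rule unfolding n_def
    by (rule transl_transl_inst.intros(2)) (rule transl_transl_inst.intros(4), use li in \<open>simp add: n_def\<close>)
  have allt: "\<forall>j<n. \<exists>t'. td_inst Th ss (\<zeta>s!j) t'" using zs(2) by blast
  then obtain ts' where ts': "length ts' = n" "\<forall>j<n. td_inst Th ss (\<zeta>s!j) (ts'!j)"
    using choice_list[OF allt] by (elim exE conjE) (rule that, assumption+)
  have th: "td_inst Th ss (RNode g \<zeta>s) (Node g ts')"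
    using ts' zs(1) by (intro td_run_td_inst.intros) (auto simp: list_all2_conv_all_nth)
  have T2part: "\<forall>p u. p\<in>S \<longrightarrow> td_run T2 p t u \<longrightarrow>
          (\<exists>\<gamma>. transl T2 p (RNode g \<zeta>s) \<gamma> \<and> rstates \<gamma> \<subseteq> QM \<and> td_inst Mb (map (rl Th) ss) \<gamma> u)"
  proof (intro allI impI)
    fix p u assume p: "p \<in> S" "td_run T2 p t u"
    from p(2) obtain \<eta> where \<eta>: "(p,(g,length ts),\<eta>) \<in> td_rules T2" "td_inst T2 ts \<eta> u"
      unfolding t by (auto elim: run_NodeE)
    have "\<eta> \<in> \<Gamma> p" using \<eta> ln by (auto simp: \<Gamma>_def)
    then have xs: "\<forall>j. xstates \<eta> j \<subseteq> Ss j" using p(1) by (auto simp: Ss_def)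
    have hyp: "\<forall>j<length ts. \<forall>p' u'. p' \<in> Ss (Suc j) \<longrightarrow> td_run T2 p' (ts!j) u' \<longrightarrow>
       (\<exists>\<gamma>. transl T2 p' (\<zeta>s!j) \<gamma> \<and> rstates \<gamma> \<subseteq> QM \<and> td_inst Mb (map (rl Th) ss) \<gamma> u')"
      using zs(2) ln by blast
    have lz: "length \<zeta>s = length ts" using zs(1) ln by simp
    obtain \<gamma> where g: "transl_inst T2 \<zeta>s \<eta> \<gamma>" "rstates \<gamma> \<subseteq> QM" "td_inst Mb (map (rl Th) ss) \<gamma> u"
      using I_lem[OF \<eta>(2) xs lz hyp] by (elim exE conjE) (rule that, assumption+)
    have "transl T2 p (RNode g \<zeta>s) \<gamma>"
      using \<eta>(1) g(1) zs(1) ln by (intro transl_transl_inst.intros) auto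
    with g show "\<exists>\<gamma>. transl T2 p (RNode g \<zeta>s) \<gamma> \<and> rstates \<gamma> \<subseteq> QM \<and> td_inst Mb (map (rl Th) ss) \<gamma> u"
      by blast
  qed
  show ?case using tr th T2part by blast
qed

end



context comp begin

lemma M: "td_run T1 q s t \<Longrightarrow> S \<subseteq> td_states T2 \<Longrightarrow> (\<forall>p\<in>S. \<exists>u. td_run T2 p t u) \<Longrightarrow>
   (\<exists>t'. td_run Th (q,S) s t') \<and> (\<forall>p u. p\<in>S \<longrightarrow> td_run T2 p t u \<longrightarrow> td_run Mb ((q,S),p) (rl Th s) u)"
proof (induction s arbitrary: q t S)
  case (Node a ss)
  from Node.prems(1) obtain \<xi> where r: "(q,(a,length ss),\<xi>) \<in> td_rules T1" "td_inst T1 ss \<xi> t"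
    by (auto elim: run_NodeE)
  from wf1_rule[OF r(1)] have q: "q \<in> td_states T1" and wf: "wf_rhs (td_states T1) (td_outp T1) (length ss) \<xi>"
    by auto
  have IH': "(\<exists>t'. td_run Th (q,S) s t') \<and> (\<forall>p u. p\<in>S \<longrightarrow> td_run T2 p t u \<longrightarrow> td_run Mb ((q,S),p) (rl Th s) u)"
    if "s \<in> set ss" "td_run T1 q s t" "S \<subseteq> td_states T2" "\<forall>p\<in>S. \<exists>u. td_run T2 p t u" for s q t S
    using Node.IH[OF that] .
  have ex: "\<exists>\<zeta>. transl (domA T2) S \<xi> \<zeta> \<and> (\<exists>t'. td_inst Th ss \<zeta> t') \<and>
    (\<forall>p u. p\<in>S \<longrightarrow> td_run T2 p t u \<longrightarrow>
          (\<exists>\<gamma>. transl T2 p \<zeta> \<gamma> \<and> rstates \<gamma> \<subseteq> QM \<and> td_inst Mb (map (rl Th) ss) \<gamma> u))"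
  proof (rule R)
    show "(\<exists>t'. td_run Th (q,S) s t') \<and> (\<forall>p u. p\<in>S \<longrightarrow> td_run T2 p t u \<longrightarrow> td_run Mb ((q,S),p) (rl Th s) u)"
      if "s \<in> set ss" "td_run T1 q s t" "S \<subseteq> td_states T2" "\<forall>p\<in>S. \<exists>u. td_run T2 p t u" for s q t S
      using IH'[OF that] .
  qed (use wf r(2) Node.prems(2,3) in auto)
  obtain \<zeta> t' where z: "transl (domA T2) S \<xi> \<zeta>" and t': "td_inst Th ss \<zeta> t'"
    and z3: "\<forall>p u. p\<in>S \<longrightarrow> td_run T2 p t u \<longrightarrow>
          (\<exists>\<gamma>. transl T2 p \<zeta> \<gamma> \<and> rstates \<gamma> \<subseteq> QM \<and> td_inst Mb (map (rl Th) ss) \<gamma> u)"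
    using ex by (elim exE conjE) (rule that, assumption+)
  have thr: "((q,S),(a,length ss),\<zeta>) \<in> td_rules Th"
    unfolding Th_rules using r(1) Node.prems(2) z by blast
  have part1: "\<exists>t'. td_run Th (q,S) (Node a ss) t'"
    using td_run_td_inst.intros(1)[OF thr t'] by (rule exI)
  have part2: "td_run Mb ((q,S),p) (rl Th (Node a ss)) u" if p: "p \<in> S" "td_run T2 p t u" for p u
  proof -
    obtain \<gamma> where g: "transl T2 p \<zeta> \<gamma>" "rstates \<gamma> \<subseteq> QM" "td_inst Mb (map (rl Th) ss) \<gamma> u"
      using z3 p by (meson)
    let ?ls = "map (\<lambda>s. {x \<in> td_states Th. \<exists>t. td_run Th x s t}) ss"
    have ls: "\<forall>i<length ss. ?ls!i \<subseteq> td_states Th \<and> xstates \<zeta> (Suc i) \<subseteq> ?ls!i"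
    proof (intro allI impI conjI)
      fix i assume i: "i < length ss"
      show "?ls!i \<subseteq> td_states Th" using i by auto
      show "xstates \<zeta> (Suc i) \<subseteq> ?ls!i"
      proof
        fix x assume x: "x \<in> xstates \<zeta> (Suc i)"
        have "x \<in> td_states Th" using Th_xstates[OF thr x] .
        moreover have "\<exists>t. td_run Th x (ss!i) t" using inst_xstates[OF t' x] by simp
        ultimately show "x \<in> ?ls!i" using i by simp
      qed
    qed
    have mr: "(((q,S),p),((a,?ls),length ss),\<gamma>) \<in> td_rules Mb"
      unfolding M_simps by (rule Mrule[OF thr p(1) g(1) g(2) _ ls]) simp
    have "td_run Mb ((q,S),p) (Node (a,?ls) (map (rl Th) ss)) u"
      using td_run_td_inst.intros(1)[of "((q,S),p)" "(a,?ls)" "map (rl Th) ss" \<gamma> Mb u] mr g(3) by simp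
    then show ?thesis by simp
  qed
  show ?case using part1 part2 by blast
qed

end

theorem lemma4:
  fixes T1 :: "('q1, 'f, 'g) td" and T2 :: "('q2, 'g, 'h) td"
  assumes "wf_td T1" and "wf_td T2" and "td_inp T2 = td_outp T1"
  shows "Rel (T1hat T1 T2) O Rel T2 \<subseteq> Rel_la (Mcon T1 T2)"
proof
  interpret comp T1 T2 using assms by unfold_locales
  fix x assume "x \<in> Rel (T1hat T1 T2) O Rel T2"
  then obtain s t u where x: "x = (s,u)" and st: "(s,t) \<in> Rel (T1hat T1 T2)" and tu: "(t,u) \<in> Rel T2"
    by blast
  from st have s: "s \<in> trees (td_inp T1)" and run1: "td_run Th (td_init Th) s t"
    by (auto simp: Rel_def Th_simps)
  from tu have u: "u \<in> trees (td_outp T2)" and run2: "td_run T2 (td_init T2) t u"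
    by (auto simp: Rel_def)
  have r1: "td_run T1 (td_init T1) s t" using proj(1)[OF run1] by (simp add: Th_simps)
  have q20: "td_init T2 \<in> td_states T2" using assms(2) by (simp add: wf_td_def)
  have "td_run Mb ((td_init T1, {td_init T2}), td_init T2) (rl Th s) u"
    using M[OF r1, of "{td_init T2}"] q20 run2 by blast
  then show "x \<in> Rel_la (Mcon T1 T2)"
    unfolding Rel_la_def x using s u relab[OF s] by (auto simp: M_simps)
qed


end
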